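(* For all $n\ge 1$, $|F_n(321,31524)|=\dfrac{P_n+P_{n-1}+1}{2}$, where $P_n$ are the Pell numbers: $P_0=0$, $P_1=1$, $P_n=2P_{n-1}+P_{n-2}$ for $n\ge2$.
   Context: A permutation $\pi$ avoids a classical pattern $p\in S_k$ if no subsequence of $\pi$ of length $k$ is order-isomorphic to $p$. A Fishburn permutation is a permutation $\pi=\pi_1\cdots\pi_n$ of $[n]$ for which there are no indices $i<j$ with $\pi_j<\pi_i<\pi_{i+1}$ and $\pi_i=\pi_j+1$. $F_n(\sigma_1,\dots,\sigma_k)$ denotes the set of Fishburn permutations of length $n$ avoiding each of the classical patterns $\sigma_1,\dots,\sigma_k$. *)

theory Defs
  imports Complex_Main
begin

definition is_perm :: "nat \<Rightarrow> nat list \<Rightarrow> bool" where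
  "is_perm n p \<longleftrightarrow> length p = n \<and> distinct p \<and> set p = {1..n}"

definition contains :: "nat list \<Rightarrow> nat list \<Rightarrow> bool" where
  "contains p q \<longleftrightarrow> (\<exists>idx :: nat list. length idx = length q \<and> sorted_wrt (<) idx
      \<and> (\<forall>i \<in> set idx. i < length p)
      \<and> (\<forall>a < length q. \<forall>b < length q. (p ! (idx ! a) < p ! (idx ! b)) \<longleftrightarrow> (q ! a < q ! b)))"

definition avoids :: "nat list \<Rightarrow> nat list \<Rightarrow> bool" where
  "avoids p q \<longleftrightarrow> \<not> contains p q"

definition fishburn :: "nat list \<Rightarrow> bool" where
  "fishburn p \<longleftrightarrow> \<not> (\<exists>i j. i < j \<and> j < length p \<and> Suc i < length p \<and>
      p ! j < p ! i \<and> p ! i < p ! Suc i \<and> p ! i = p ! j + 1)"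

definition F :: "nat \<Rightarrow> nat list list \<Rightarrow> nat list set" where
  "F n pats = {p. is_perm n p \<and> fishburn p \<and> (\<forall>q \<in> set pats. avoids p q)}"

fun pell :: "nat \<Rightarrow> nat" where
  "pell 0 = 0"
| "pell (Suc 0) = 1"
| "pell (Suc (Suc n)) = 2 * pell (Suc n) + pell n"

end

theory Submission
  imports Defs "HOL-Library.Sublist"
begin


lemma subseq_idx:
  "sorted_wrt (<) idx \<Longrightarrow> \<forall>i\<in>set idx. i < length p \<Longrightarrow> subseq (map ((!) p) idx) p"
proof (induction p arbitrary: idx)
  case Nil
  then show ?case by (cases idx) auto
next
  case (Cons x p)
  show ?case
  proof (cases idx)
    case Nil then show ?thesis by simp
  next
    case (Cons i js)
    show ?thesis
    proof (cases "i = 0")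
      case True
      have pos: "\<forall>j\<in>set js. 0 < j" using Cons.prems Cons True by auto
      have eq: "map ((!) (x # p)) js = map ((!) p) (map (\<lambda>j. j - 1) js)"
        using pos by (auto simp: nth_Cons')
      have IH: "subseq (map ((!) p) (map (\<lambda>j. j - 1) js)) p"
        apply (rule Cons.IH)
        using Cons.prems Cons pos by (auto simp: sorted_wrt_map elim!: sorted_wrt_mono_rel[rotated])
      show ?thesis unfolding Cons True
        by (simp only: list.map nth_Cons_0 eq) (rule subseq_Cons2[OF IH])
    next
      case False
      have pos: "\<forall>j\<in>set idx. 0 < j" using Cons.prems Cons False by auto
      have eq: "map ((!) (x # p)) idx = map ((!) p) (map (\<lambda>j. j - 1) idx)"
        using pos by (auto simp: nth_Cons')
      have IH: "subseq (map ((!) p) (map (\<lambda>j. j - 1) idx)) p"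
        apply (rule Cons.IH)
        using Cons.prems pos by (auto simp: sorted_wrt_map elim!: sorted_wrt_mono_rel[rotated])
      show ?thesis unfolding eq by (rule list_emb_Cons[OF IH])
    qed
  qed
qed

lemma idx_subseq:
  "subseq s p \<Longrightarrow> \<exists>idx. sorted_wrt (<) idx \<and> (\<forall>i\<in>set idx. i < length p) \<and> s = map ((!) p) idx"
proof (induction rule: list_emb.induct)
  case (list_emb_Nil ys)
  then show ?case by (intro exI[of _ "[]"]) auto
next
  case (list_emb_Cons xs ys y)
  then obtain idx where "sorted_wrt (<) idx" "\<forall>i\<in>set idx. i < length ys" "xs = map ((!) ys) idx" by blast
  then show ?case by (intro exI[of _ "map Suc idx"]) (auto simp: sorted_wrt_map)
next
  case (list_emb_Cons2 x y xs ys)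
  then obtain idx where "sorted_wrt (<) idx" "\<forall>i\<in>set idx. i < length ys" "xs = map ((!) ys) idx" by blast
  then show ?case using list_emb_Cons2.hyps(1) by (intro exI[of _ "0 # map Suc idx"]) (auto simp: sorted_wrt_map)
qed

lemma contains_subseq:
  "contains p q \<longleftrightarrow> (\<exists>s. subseq s p \<and> length s = length q \<and>
     (\<forall>a < length q. \<forall>b < length q. (s ! a < s ! b) \<longleftrightarrow> (q ! a < q ! b)))"
proof
  assume "contains p q"
  then obtain idx where h: "length idx = length q" "sorted_wrt (<) idx" "\<forall>i \<in> set idx. i < length p"
     "\<forall>a < length q. \<forall>b < length q. (p ! (idx ! a) < p ! (idx ! b)) \<longleftrightarrow> (q ! a < q ! b)"
    unfolding contains_def by blast
  show "\<exists>s. subseq s p \<and> length s = length q \<and>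
     (\<forall>a < length q. \<forall>b < length q. (s ! a < s ! b) \<longleftrightarrow> (q ! a < q ! b))"
    by (rule exI[of _ "map ((!) p) idx"]) (use h subseq_idx in auto)
next
  assume "\<exists>s. subseq s p \<and> length s = length q \<and>
     (\<forall>a < length q. \<forall>b < length q. (s ! a < s ! b) \<longleftrightarrow> (q ! a < q ! b))"
  then obtain s where s: "subseq s p" "length s = length q"
     "\<forall>a < length q. \<forall>b < length q. (s ! a < s ! b) \<longleftrightarrow> (q ! a < q ! b)" by blast
  obtain idx where "sorted_wrt (<) idx" "\<forall>i\<in>set idx. i < length p" "s = map ((!) p) idx"
    using idx_subseq[OF s(1)] by blast
  then show "contains p q" unfolding contains_def using s
    by (intro exI[of _ idx]) auto
qed

definition h321 :: "nat list \<Rightarrow> bool" where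
  "h321 p \<longleftrightarrow> (\<exists>a b c. subseq [a,b,c] p \<and> b < a \<and> c < b)"

definition h5 :: "nat list \<Rightarrow> bool" where
  "h5 p \<longleftrightarrow> (\<exists>a b c d e. subseq [a,b,c,d,e] p \<and> b < d \<and> d < a \<and> a < e \<and> e < c)"

lemma n3: "(3::nat) = Suc (Suc (Suc 0))" by simp
lemma n5: "(5::nat) = Suc (Suc (Suc (Suc (Suc 0))))" by simp

lemma L3: "length [x,y,z::nat] = 3" by simp
lemma L5: "length [x,y,z,u,v::nat] = 5" by simp

lemma allS: "(\<forall>i<Suc n. P i) \<longleftrightarrow> P n \<and> (\<forall>i<n. P i)"
  by (auto simp: less_Suc_eq)
lemma all3: "(\<forall>i<Suc (Suc (Suc 0)). P i) \<longleftrightarrow> P 0 \<and> P (Suc 0) \<and> P (Suc (Suc 0))"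
  by (simp only: allS) auto
lemma all5: "(\<forall>i<Suc (Suc (Suc (Suc (Suc 0)))). P i) \<longleftrightarrow> P 0 \<and> P (Suc 0) \<and> P (Suc (Suc 0)) \<and> P (Suc (Suc (Suc 0))) \<and> P (Suc (Suc (Suc (Suc 0))))"
  by (simp only: allS) auto

lemma len3: "length s = Suc (Suc (Suc 0)) \<longleftrightarrow> (\<exists>a b c. s = [a,b,c])"
  by (auto simp: length_Suc_conv)
lemma len5: "length s = Suc (Suc (Suc (Suc (Suc 0)))) \<longleftrightarrow> (\<exists>a b c d e. s = [a,b,c,d,e])"
  by (auto simp: length_Suc_conv)

lemma contains321: "contains p [3,2,1] \<longleftrightarrow> h321 p"
proof
  assume "contains p [3,2,1]"
  then obtain s where s: "subseq s p" "length s = 3"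
     "\<forall>a < 3. \<forall>b < 3. (s ! a < s ! b) \<longleftrightarrow> ([3,2,1::nat] ! a < [3,2,1::nat] ! b)"
    unfolding contains_subseq L3 by blast
  obtain a b c where abc: "s = [a,b,c]" using s(2) unfolding n3 len3 by blast
  have "b < a" using s(3)[rule_format, of 1 0] abc by simp
  moreover have "c < b" using s(3)[rule_format, of 2 1] abc by simp
  ultimately show "h321 p" unfolding h321_def using s(1) abc by blast
next
  assume "h321 p"
  then obtain a b c where h: "subseq [a,b,c] p" "b < a" "c < b" unfolding h321_def by blast
  have "\<forall>i < 3. \<forall>j < 3. ([a,b,c] ! i < [a,b,c] ! j) \<longleftrightarrow> ([3,2,1::nat] ! i < [3,2,1::nat] ! j)"
    unfolding n3 all3 using h(2,3) by simp
  then show "contains p [3,2,1]" unfolding contains_subseq L3 using h(1) L3 by blast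
qed

lemma contains5: "contains p [3,1,5,2,4] \<longleftrightarrow> h5 p"
proof
  assume "contains p [3,1,5,2,4]"
  then obtain s where s: "subseq s p" "length s = 5"
     "\<forall>i < 5. \<forall>j < 5. (s ! i < s ! j) \<longleftrightarrow> ([3,1,5,2,4::nat] ! i < [3,1,5,2,4::nat] ! j)"
    unfolding contains_subseq L5 by blast
  obtain a b c d e where abc: "s = [a,b,c,d,e]" using s(2) unfolding n5 len5 by blast
  have "b < d" using s(3)[rule_format, of 1 3] abc by simp
  moreover have "d < a" using s(3)[rule_format, of 3 0] abc by simp
  moreover have "a < e" using s(3)[rule_format, of 0 4] abc by simp
  moreover have "e < c" using s(3)[rule_format, of 4 2] abc by simp
  ultimately show "h5 p" unfolding h5_def using s(1) abc by blast
next
  assume "h5 p"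
  then obtain a b c d e where h: "subseq [a,b,c,d,e] p" "b < d" "d < a" "a < e" "e < c"
    unfolding h5_def by blast
  have "\<forall>i < 5. \<forall>j < 5. ([a,b,c,d,e] ! i < [a,b,c,d,e] ! j) \<longleftrightarrow> ([3,1,5,2,4::nat] ! i < [3,1,5,2,4::nat] ! j)"
    unfolding n5 all5 using h(2-5) by simp
  then show "contains p [3,1,5,2,4]" unfolding contains_subseq L5 using h(1) L5 by blast
qed



lemma fishburn_Cons:
  "fishburn (x # xs) \<longleftrightarrow> ((xs \<noteq> [] \<and> x < hd xs) \<longrightarrow> (\<forall>z\<in>set xs. z + 1 \<noteq> x)) \<and> fishburn xs"
proof
  assume F: "fishburn (x # xs)"
  have P1: "(xs \<noteq> [] \<and> x < hd xs) \<longrightarrow> (\<forall>z\<in>set xs. z + 1 \<noteq> x)"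
  proof (intro impI ballI notI)
    fix z assume H: "xs \<noteq> [] \<and> x < hd xs" "z \<in> set xs" "z + 1 = x"
    then obtain j where j: "j < length xs" "xs ! j = z" by (auto simp: in_set_conv_nth)
    have "0 < Suc j \<and> Suc j < length (x # xs) \<and> Suc 0 < length (x # xs) \<and>
      (x # xs) ! Suc j < (x # xs) ! 0 \<and> (x # xs) ! 0 < (x # xs) ! Suc 0 \<and> (x # xs) ! 0 = (x # xs) ! Suc j + 1"
      using H j by (cases xs) auto
    then show False using F unfolding fishburn_def by blast
  qed
  have P2: "fishburn xs"
    unfolding fishburn_def
  proof
    assume "\<exists>i j. i < j \<and> j < length xs \<and> Suc i < length xs \<and>
      xs ! j < xs ! i \<and> xs ! i < xs ! Suc i \<and> xs ! i = xs ! j + 1"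
    then obtain i j where "i < j \<and> j < length xs \<and> Suc i < length xs \<and>
      xs ! j < xs ! i \<and> xs ! i < xs ! Suc i \<and> xs ! i = xs ! j + 1" by blast
    then have "Suc i < Suc j \<and> Suc j < length (x#xs) \<and> Suc (Suc i) < length (x#xs) \<and>
      (x#xs) ! Suc j < (x#xs) ! Suc i \<and> (x#xs) ! Suc i < (x#xs) ! Suc (Suc i) \<and> (x#xs) ! Suc i = (x#xs) ! Suc j + 1"
      by simp
    then show False using F unfolding fishburn_def by blast
  qed
  show "((xs \<noteq> [] \<and> x < hd xs) \<longrightarrow> (\<forall>z\<in>set xs. z + 1 \<noteq> x)) \<and> fishburn xs"
    using P1 P2 by blast
next
  assume R: "((xs \<noteq> [] \<and> x < hd xs) \<longrightarrow> (\<forall>z\<in>set xs. z + 1 \<noteq> x)) \<and> fishburn xs"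
  show "fishburn (x # xs)"
    unfolding fishburn_def
  proof
    assume "\<exists>i j. i < j \<and> j < length (x#xs) \<and> Suc i < length (x#xs) \<and>
      (x#xs) ! j < (x#xs) ! i \<and> (x#xs) ! i < (x#xs) ! Suc i \<and> (x#xs) ! i = (x#xs) ! j + 1"
    then obtain i j where V: "i < j \<and> j < length (x#xs) \<and> Suc i < length (x#xs) \<and>
      (x#xs) ! j < (x#xs) ! i \<and> (x#xs) ! i < (x#xs) ! Suc i \<and> (x#xs) ! i = (x#xs) ! j + 1" by blast
    then obtain j' where j': "j = Suc j'" by (cases j) auto
    show False
    proof (cases i)
      case 0
      have "xs \<noteq> [] \<and> x < hd xs" using V 0 by (cases xs) auto
      moreover have "xs ! j' \<in> set xs" using V j' by simp
      moreover have "xs ! j' + 1 = x" using V 0 j' by simp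
      ultimately show False using R by blast
    next
      case (Suc i')
      have "i' < j' \<and> j' < length xs \<and> Suc i' < length xs \<and>
        xs ! j' < xs ! i' \<and> xs ! i' < xs ! Suc i' \<and> xs ! i' = xs ! j' + 1"
        using V Suc j' by simp
      then show False using R unfolding fishburn_def by blast
    qed
  qed
qed

fun fsh :: "nat list \<Rightarrow> bool" where
  "fsh (x # y # vs) = ((x < y \<longrightarrow> (\<forall>z\<in>set (y # vs). z + 1 \<noteq> x)) \<and> fsh (y # vs))"
| "fsh _ = True"

lemma fsh_Cons:
  "fsh (x # xs) \<longleftrightarrow> ((xs \<noteq> [] \<and> x < hd xs) \<longrightarrow> (\<forall>z\<in>set xs. z + 1 \<noteq> x)) \<and> fsh xs"
  by (cases xs) auto

lemma fishburn_fsh: "fishburn p \<longleftrightarrow> fsh p"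
proof (induction p)
  case Nil
  then show ?case unfolding fishburn_def by simp
next
  case (Cons x xs)
  then show ?case by (simp only: fishburn_Cons fsh_Cons)
qed

lemma fsh_map:
  assumes "\<forall>x\<in>set xs. \<forall>y\<in>set xs. (f x < f y \<longleftrightarrow> x < y) \<and> (f x + 1 = f y \<longleftrightarrow> x + 1 = y)"
  shows "fsh (map f xs) \<longleftrightarrow> fsh xs"
  using assms
proof (induction xs)
  case Nil
  then show ?case by simp
next
  case (Cons x xs)
  then have IH: "fsh (map f xs) \<longleftrightarrow> fsh xs" by simp
  show ?case
  proof (cases xs)
    case Nil
    then show ?thesis by simp
  next
    case (Cons y ys)
    have "(f x < f y \<longleftrightarrow> x < y)" using Cons.prems Cons by simp
    moreover have "(\<forall>z\<in>set xs. f z + 1 \<noteq> f x) \<longleftrightarrow> (\<forall>z\<in>set xs. z + 1 \<noteq> x)"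
      using Cons.prems by auto
    ultimately show ?thesis using IH Cons by (simp only: fsh_Cons list.map list.sel list.distinct set_map) auto
  qed
qed

lemma fsh_append:
  assumes "\<forall>x\<in>set A. \<forall>y\<in>set B. x < y"
  shows "fsh (A @ B) \<longleftrightarrow> fsh A \<and> fsh B"
  using assms
proof (induction A)
  case Nil
  then show ?case by simp
next
  case (Cons a A)
  then have IH: "fsh (A @ B) \<longleftrightarrow> fsh A \<and> fsh B" by simp
  show ?case
  proof (cases A)
    case Nil
    have "(\<forall>z\<in>set B. z + 1 \<noteq> a)" using Cons.prems by fastforce
    then show ?thesis using Nil by (simp add: fsh_Cons)
  next
    case (Cons a' A')
    have "\<forall>z\<in>set B. z + 1 \<noteq> a"
      using Cons.prems by fastforce
    then show ?thesis using IH Cons by (auto simp add: fsh_Cons)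
  qed
qed

lemma subseq_set: "subseq s xs \<Longrightarrow> set s \<subseteq> set xs"
  by (induction rule: list_emb.induct) auto

lemma subseq_map_iff: "subseq s (map f xs) \<longleftrightarrow> (\<exists>s'. subseq s' xs \<and> s = map f s')"
proof
  show "subseq s (map f xs) \<Longrightarrow> \<exists>s'. subseq s' xs \<and> s = map f s'"
  proof (induction xs arbitrary: s)
    case Nil
    then show ?case by auto
  next
    case (Cons x xs)
    show ?case
    proof (cases s)
      case Nil then show ?thesis by (intro exI[of _ "[]"]) auto
    next
      case (Cons a s0)
      show ?thesis
      proof (cases "a = f x \<and> subseq s0 (map f xs)")
        case True
        then obtain s' where "subseq s' xs" "s0 = map f s'" using Cons.IH by blast
        then show ?thesis using True Cons by (intro exI[of _ "x # s'"]) auto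
      next
        case False
        then have "subseq s (map f xs)" using Cons.prems Cons
          by (cases "a = f x") auto
        then obtain s' where "subseq s' xs" "s = map f s'" using Cons.IH by blast
        then show ?thesis by (intro exI[of _ s']) auto
      qed
    qed
  qed
  show "\<exists>s'. subseq s' xs \<and> s = map f s' \<Longrightarrow> subseq s (map f xs)"
    by (elim exE conjE) (simp add: subseq_map)
qed

lemma map_eq3:
  assumes H: "[a,b,c] = map f s'"
  shows "\<exists>a' b' c'. s' = [a',b',c'] \<and> a = f a' \<and> b = f b' \<and> c = f c'"
proof -
  have "length s' = Suc (Suc (Suc 0))" using arg_cong[OF H, of length] by simp
  then obtain a' b' c' where "s' = [a',b',c']" unfolding len3 by blast
  then show ?thesis using H by auto
qed

lemma map_eq5:
  assumes H: "[a,b,c,d,e] = map f s'"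
  shows "\<exists>a' b' c' d' e'. s' = [a',b',c',d',e'] \<and> a = f a' \<and> b = f b' \<and> c = f c' \<and> d = f d' \<and> e = f e'"
proof -
  have "length s' = Suc (Suc (Suc (Suc (Suc 0))))" using arg_cong[OF H, of length] by simp
  then obtain a' b' c' d' e' where "s' = [a',b',c',d',e']" unfolding len5 by blast
  then show ?thesis using H by auto
qed

lemma h321_map:
  assumes "\<forall>x\<in>set xs. \<forall>y\<in>set xs. f x < f y \<longleftrightarrow> x < y"
  shows "h321 (map f xs) \<longleftrightarrow> h321 xs"
proof
  assume "h321 (map f xs)"
  then obtain a b c where h: "subseq [a,b,c] (map f xs)" "b < a" "c < b" unfolding h321_def by blast
  have "\<exists>s'. subseq s' xs \<and> [a,b,c] = map f s'" using iffD1[OF subseq_map_iff h(1)] .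
  then obtain s' where s'0: "subseq s' xs \<and> [a,b,c] = map f s'" ..
  then have s': "subseq s' xs" "[a,b,c] = map f s'" by simp_all
  obtain a' b' c' where abc: "s' = [a',b',c']" "a = f a'" "b = f b'" "c = f c'"
    using map_eq3[OF s'(2)] by blast
  have "set s' \<subseteq> set xs" by (rule subseq_set[OF s'(1)])
  then have m: "a' \<in> set xs" "b' \<in> set xs" "c' \<in> set xs" unfolding abc(1) by simp_all
  have "b' < a'" using assms[rule_format, OF m(2) m(1)] h(2) abc by simp
  moreover have "c' < b'" using assms[rule_format, OF m(3) m(2)] h(3) abc by simp
  ultimately show "h321 xs" unfolding h321_def using s'(1) abc(1) by blast
next
  assume "h321 xs"
  then obtain a b c where h: "subseq [a,b,c] xs" "b < a" "c < b" unfolding h321_def by blast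
  have "set [a,b,c] \<subseteq> set xs" by (rule subseq_set[OF h(1)])
  then have m: "a \<in> set xs" "b \<in> set xs" "c \<in> set xs" by simp_all
  have "f b < f a" using assms[rule_format, OF m(2) m(1)] h(2) by simp
  moreover have "f c < f b" using assms[rule_format, OF m(3) m(2)] h(3) by simp
  moreover have "subseq [f a, f b, f c] (map f xs)" using subseq_map[OF h(1)] by simp
  ultimately show "h321 (map f xs)" unfolding h321_def by blast
qed

lemma h5_map:
  assumes "\<forall>x\<in>set xs. \<forall>y\<in>set xs. f x < f y \<longleftrightarrow> x < y"
  shows "h5 (map f xs) \<longleftrightarrow> h5 xs"
proof
  assume "h5 (map f xs)"
  then obtain a b c d e where h: "subseq [a,b,c,d,e] (map f xs)" "b < d" "d < a" "a < e" "e < c"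
    unfolding h5_def by blast
  have "\<exists>s'. subseq s' xs \<and> [a,b,c,d,e] = map f s'" using iffD1[OF subseq_map_iff h(1)] .
  then obtain s' where s'0: "subseq s' xs \<and> [a,b,c,d,e] = map f s'" ..
  then have s': "subseq s' xs" "[a,b,c,d,e] = map f s'" by simp_all
  obtain a' b' c' d' e' where abc: "s' = [a',b',c',d',e']" "a = f a'" "b = f b'" "c = f c'"
     "d = f d'" "e = f e'"
    using map_eq5[OF s'(2)] by blast
  have "set s' \<subseteq> set xs" by (rule subseq_set[OF s'(1)])
  then have m: "a' \<in> set xs" "b' \<in> set xs" "c' \<in> set xs" "d' \<in> set xs" "e' \<in> set xs"
    unfolding abc(1) by simp_all
  have "b' < d'" using assms[rule_format, OF m(2) m(4)] h abc by simp
  moreover have "d' < a'" using assms[rule_format, OF m(4) m(1)] h abc by simp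
  moreover have "a' < e'" using assms[rule_format, OF m(1) m(5)] h abc by simp
  moreover have "e' < c'" using assms[rule_format, OF m(5) m(3)] h abc by simp
  ultimately show "h5 xs" unfolding h5_def using s'(1) abc(1) by blast
next
  assume "h5 xs"
  then obtain a b c d e where h: "subseq [a,b,c,d,e] xs" "b < d" "d < a" "a < e" "e < c"
    unfolding h5_def by blast
  have "set [a,b,c,d,e] \<subseteq> set xs" by (rule subseq_set[OF h(1)])
  then have m: "a \<in> set xs" "b \<in> set xs" "c \<in> set xs" "d \<in> set xs" "e \<in> set xs"
    by simp_all
  have "f b < f d" using assms[rule_format, OF m(2) m(4)] h by simp
  moreover have "f d < f a" using assms[rule_format, OF m(4) m(1)] h by simp
  moreover have "f a < f e" using assms[rule_format, OF m(1) m(5)] h by simp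
  moreover have "f e < f c" using assms[rule_format, OF m(5) m(3)] h by simp
  moreover have "subseq [f a, f b, f c, f d, f e] (map f xs)" using subseq_map[OF h(1)] by simp
  ultimately show "h5 (map f xs)" unfolding h5_def by blast
qed

lemma h321_mono: assumes A: "subseq ys xs" and B: "h321 ys" shows "h321 xs"
proof -
  obtain a b c where h: "subseq [a,b,c] ys" "b < a" "c < b" using B unfolding h321_def by blast
  have "subseq [a,b,c] xs" using subseq_order.order_trans[OF h(1) A] .
  then show ?thesis using h unfolding h321_def by blast
qed

lemma h5_mono: assumes A: "subseq ys xs" and B: "h5 ys" shows "h5 xs"
proof -
  obtain a b c d e where h: "subseq [a,b,c,d,e] ys" "b < d" "d < a" "a < e" "e < c"
    using B unfolding h5_def by blast
  have "subseq [a,b,c,d,e] xs" using subseq_order.order_trans[OF h(1) A] .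
  then show ?thesis using h unfolding h5_def by blast
qed

lemma cut_gen:
  assumes "L = s1 @ s2" "s1 \<noteq> []" "s2 \<noteq> []"
    "\<forall>k. 0 < k \<longrightarrow> k < length L \<longrightarrow> (\<exists>x\<in>set (take k L). \<exists>y\<in>set (drop k L). y < x)"
  shows "\<exists>x\<in>set s1. \<exists>y\<in>set s2. y < x"
proof -
  have e: "s1 = take (length s1) L" "s2 = drop (length s1) L" using assms(1) by simp_all
  have "0 < length s1" "length s1 < length L" using assms(1-3) by auto
  then have "\<exists>x\<in>set (take (length s1) L). \<exists>y\<in>set (drop (length s1) L). y < x"
    using assms(4) by blast
  then show ?thesis using e by simp
qed

lemma h321_append:
  assumes "\<forall>x\<in>set A. \<forall>y\<in>set B. x < y"
  shows "h321 (A @ B) \<longleftrightarrow> h321 A \<or> h321 B"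
proof
  assume "h321 (A @ B)"
  then obtain a b c where h: "subseq [a,b,c] (A @ B)" "b < a" "c < b" unfolding h321_def by blast
  then obtain s1 s2 where s: "[a,b,c] = s1 @ s2" "subseq s1 A" "subseq s2 B"
    using subseq_appendE[OF h(1)] by blast
  have A1: "set s1 \<subseteq> set A" "set s2 \<subseteq> set B" using subseq_set[OF s(2)] subseq_set[OF s(3)] by simp_all
  have cuts: "\<forall>k. 0 < k \<longrightarrow> k < length [a,b,c] \<longrightarrow> (\<exists>x\<in>set (take k [a,b,c]). \<exists>y\<in>set (drop k [a,b,c]). y < x)"
  proof (intro allI impI)
    fix k :: nat assume "0 < k" "k < length [a,b,c]"
    then have "k = 1 \<or> k = 2" by auto
    then show "\<exists>x\<in>set (take k [a,b,c]). \<exists>y\<in>set (drop k [a,b,c]). y < x"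
      using h by (auto simp: numeral_eq_Suc)
  qed
  show "h321 A \<or> h321 B"
  proof (cases "s1 = [] \<or> s2 = []")
    case True
    then show ?thesis
    proof
      assume "s1 = []"
      then have "subseq [a,b,c] B" using s by simp
      then show ?thesis using h unfolding h321_def by blast
    next
      assume "s2 = []"
      then have "subseq [a,b,c] A" using s by simp
      then show ?thesis using h unfolding h321_def by blast
    qed
  next
    case False
    then obtain x y where "x \<in> set s1" "y \<in> set s2" "y < x" using cut_gen[OF s(1) _ _ cuts] by blast
    then show ?thesis using A1 assms by (meson less_asym subsetD)
  qed
next
  assume "h321 A \<or> h321 B"
  moreover have "subseq A (A @ B)" by (rule subseq_rev_drop_many) simp
  moreover have "subseq B (A @ B)" by (rule subseq_drop_many) simp
  ultimately show "h321 (A @ B)" using h321_mono by blast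
qed

lemma h5_append:
  assumes "\<forall>x\<in>set A. \<forall>y\<in>set B. x < y"
  shows "h5 (A @ B) \<longleftrightarrow> h5 A \<or> h5 B"
proof
  assume "h5 (A @ B)"
  then obtain a b c d e where h: "subseq [a,b,c,d,e] (A @ B)" "b < d" "d < a" "a < e" "e < c"
    unfolding h5_def by blast
  then obtain s1 s2 where s: "[a,b,c,d,e] = s1 @ s2" "subseq s1 A" "subseq s2 B"
    using subseq_appendE[OF h(1)] by blast
  have A1: "set s1 \<subseteq> set A" "set s2 \<subseteq> set B" using subseq_set[OF s(2)] subseq_set[OF s(3)] by simp_all
  have cuts: "\<forall>k. 0 < k \<longrightarrow> k < length [a,b,c,d,e] \<longrightarrow> (\<exists>x\<in>set (take k [a,b,c,d,e]). \<exists>y\<in>set (drop k [a,b,c,d,e]). y < x)"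
  proof (intro allI impI)
    fix k :: nat assume "0 < k" "k < length [a,b,c,d,e]"
    then have "k = 1 \<or> k = 2 \<or> k = 3 \<or> k = 4" by auto
    then show "\<exists>x\<in>set (take k [a,b,c,d,e]). \<exists>y\<in>set (drop k [a,b,c,d,e]). y < x"
      using h by (auto simp: numeral_eq_Suc)
  qed
  show "h5 A \<or> h5 B"
  proof (cases "s1 = [] \<or> s2 = []")
    case True
    then show ?thesis
    proof
      assume "s1 = []"
      then have "subseq [a,b,c,d,e] B" using s by simp
      then show ?thesis using h unfolding h5_def by blast
    next
      assume "s2 = []"
      then have "subseq [a,b,c,d,e] A" using s by simp
      then show ?thesis using h unfolding h5_def by blast
    qed
  next
    case False
    then obtain x y where "x \<in> set s1" "y \<in> set s2" "y < x" using cut_gen[OF s(1) _ _ cuts] by blast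
    then show ?thesis using A1 assms by (meson less_asym subsetD)
  qed
next
  assume "h5 A \<or> h5 B"
  moreover have "subseq A (A @ B)" by (rule subseq_rev_drop_many) simp
  moreover have "subseq B (A @ B)" by (rule subseq_drop_many) simp
  ultimately show "h5 (A @ B)" using h5_mono by blast
qed



lemma subseq_pref3:
  assumes "subseq s (x#y#z#r)"
  shows "\<exists>s1 s2. s = s1 @ s2 \<and> (s1 = [] \<or> s1 = [x] \<or> s1 = [y] \<or> s1 = [z] \<or> s1 = [x,y] \<or> s1 = [x,z]
     \<or> s1 = [y,z] \<or> s1 = [x,y,z]) \<and> subseq s2 r"
proof -
  have "subseq s ([x,y,z] @ r)" using assms by simp
  then obtain s1 s2 where "s = s1 @ s2" "subseq s1 [x,y,z]" "subseq s2 r"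
    using subseq_appendE by blast
  moreover have "s1 \<in> set (subseqs [x,y,z])" using \<open>subseq s1 [x,y,z]\<close> by (simp only: in_set_subseqs)
  then have "s1 = [] \<or> s1 = [x] \<or> s1 = [y] \<or> s1 = [z] \<or> s1 = [x,y] \<or> s1 = [x,z]
     \<or> s1 = [y,z] \<or> s1 = [x,y,z]" by (simp del: in_set_subseqs add: Let_def) blast
  ultimately show ?thesis by blast
qed

lemma L0: "subseq s r \<Longrightarrow> subseq s (x#y#r)" by (intro list_emb_Cons)
lemma Lk: "subseq s r \<Longrightarrow> subseq (x#s) (x#y#r)" by (intro list_emb_Cons2 list_emb_Cons) auto
lemma Lk1: "subseq s r \<Longrightarrow> subseq (x#y#s) (x#y#r)" by (intro list_emb_Cons2) auto

lemma insB321: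
  assumes r: "\<forall>v\<in>set r. 2 < v" and H: "h321 (k#1#2#r)"
  shows "h321 (k#1#r)"
proof -
  obtain a b c where h: "subseq [a,b,c] (k#1#2#r)" "b < a" "c < b" using H unfolding h321_def by blast
  obtain s1 s2 where s: "[a,b,c] = s1 @ s2" "s1 = [] \<or> s1 = [k] \<or> s1 = [1] \<or> s1 = [2] \<or> s1 = [k,1] \<or> s1 = [k,2]
     \<or> s1 = [1,2] \<or> s1 = [k,1,2]" "subseq s2 r"
    using subseq_pref3[OF h(1)] by blast
  have R: "\<forall>v\<in>set s2. 2 < v" using subseq_set[OF s(3)] r by blast
  have "subseq [a,b,c] (k#1#r)"
    using s(2)
  proof (elim disjE)
    assume c: "s1 = []"
    show ?thesis using c s(1) s(3) R h(2,3) by (auto intro: L0 Lk Lk1)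
  next
    assume c: "s1 = [k]"
    show ?thesis using c s(1) s(3) R h(2,3) by (auto intro: L0 Lk Lk1)
  next
    assume c: "s1 = [1]"
    show ?thesis using c s(1) s(3) R h(2,3) by (auto intro: L0 Lk Lk1)
  next
    assume c: "s1 = [2]"
    show ?thesis using c s(1) s(3) R h(2,3) by (auto intro: L0 Lk Lk1)
  next
    assume c: "s1 = [k,1]"
    show ?thesis using c s(1) s(3) R h(2,3) by (auto intro: L0 Lk Lk1)
  next
    assume c: "s1 = [k,2]"
    show ?thesis using c s(1) s(3) R h(2,3) by (auto intro: L0 Lk Lk1)
  next
    assume c: "s1 = [1,2]"
    show ?thesis using c s(1) s(3) R h(2,3) by (auto intro: L0 Lk Lk1)
  next
    assume c: "s1 = [k,1,2]"
    show ?thesis using c s(1) s(3) R h(2,3) by (auto intro: L0 Lk Lk1)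
  qed
  then show ?thesis using h unfolding h321_def by blast
qed

lemma insB5:
  assumes r: "\<forall>v\<in>set r. 2 < v" and H: "h5 (k#1#2#r)"
  shows "h5 (k#1#r)"
proof -
  obtain a b c d e where h: "subseq [a,b,c,d,e] (k#1#2#r)" "b < d" "d < a" "a < e" "e < c"
    using H unfolding h5_def by blast
  obtain s1 s2 where s: "[a,b,c,d,e] = s1 @ s2" "s1 = [] \<or> s1 = [k] \<or> s1 = [1] \<or> s1 = [2] \<or> s1 = [k,1] \<or> s1 = [k,2]
     \<or> s1 = [1,2] \<or> s1 = [k,1,2]" "subseq s2 r"
    using subseq_pref3[OF h(1)] by blast
  have R: "\<forall>v\<in>set s2. 2 < v" using subseq_set[OF s(3)] r by blast
  have "subseq [a,b,c,d,e] (k#1#r) \<or> (b = 2 \<and> subseq [a,1,c,d,e] (k#1#r))"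
    using s(2)
  proof (elim disjE)
    assume c: "s1 = []"
    show ?thesis using c s(1) s(3) R h(2-5) by (auto intro: L0 Lk Lk1)
  next
    assume c: "s1 = [k]"
    show ?thesis using c s(1) s(3) R h(2-5) by (auto intro: L0 Lk Lk1)
  next
    assume c: "s1 = [1]"
    show ?thesis using c s(1) s(3) R h(2-5) by (auto intro: L0 Lk Lk1)
  next
    assume c: "s1 = [2]"
    show ?thesis using c s(1) s(3) R h(2-5) by (auto intro: L0 Lk Lk1)
  next
    assume c: "s1 = [k,1]"
    show ?thesis using c s(1) s(3) R h(2-5) by (auto intro: L0 Lk Lk1)
  next
    assume c: "s1 = [k,2]"
    show ?thesis using c s(1) s(3) R h(2-5) by (auto intro: L0 Lk Lk1)
  next
    assume c: "s1 = [1,2]"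
    show ?thesis using c s(1) s(3) R h(2-5) by (auto intro: L0 Lk Lk1)
  next
    assume c: "s1 = [k,1,2]"
    show ?thesis using c s(1) s(3) R h(2-5) by (auto intro: L0 Lk Lk1)
  qed
  then show ?thesis
  proof
    assume "subseq [a,b,c,d,e] (k#1#r)" then show ?thesis using h unfolding h5_def by blast
  next
    assume "b = 2 \<and> subseq [a,1,c,d,e] (k#1#r)"
    moreover have "1 < d" using h(2) \<open>b = 2 \<and> subseq [a,1,c,d,e] (k#1#r)\<close> by simp
    ultimately show ?thesis using h unfolding h5_def by blast
  qed
qed

lemma insC321:
  assumes r: "\<forall>v\<in>set r. v \<noteq> k \<and> v \<noteq> k+1 \<and> 1 < v" and H: "h321 (k#1#(k+1)#r)"
  shows "h321 (k#1#r)"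
proof -
  obtain a b c where h: "subseq [a,b,c] (k#1#(k+1)#r)" "b < a" "c < b" using H unfolding h321_def by blast
  obtain s1 s2 where s: "[a,b,c] = s1 @ s2" "s1 = [] \<or> s1 = [k] \<or> s1 = [1] \<or> s1 = [k+1] \<or> s1 = [k,1] \<or> s1 = [k,k+1]
     \<or> s1 = [1,k+1] \<or> s1 = [k,1,k+1]" "subseq s2 r"
    using subseq_pref3[OF h(1)] by blast
  have R: "\<forall>v\<in>set s2. v \<noteq> k \<and> v \<noteq> k+1 \<and> 1 < v" using subseq_set[OF s(3)] r by blast
  have "subseq [a,b,c] (k#1#r) \<or> (a = k+1 \<and> subseq [k,b,c] (k#1#r) \<and> b < k)"
    using s(2)
  proof (elim disjE)
    assume c: "s1 = []"
    show ?thesis using c s(1) s(3) R h(2,3) by (auto intro: L0 Lk Lk1)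
  next
    assume c: "s1 = [k]"
    show ?thesis using c s(1) s(3) R h(2,3) by (auto intro: L0 Lk Lk1)
  next
    assume c: "s1 = [1]"
    show ?thesis using c s(1) s(3) R h(2,3) by (auto intro: L0 Lk Lk1)
  next
    assume c: "s1 = [k+1]"
    show ?thesis using c s(1) s(3) R h(2,3) by (auto intro: L0 Lk Lk1)
  next
    assume c: "s1 = [k,1]"
    show ?thesis using c s(1) s(3) R h(2,3) by (auto intro: L0 Lk Lk1)
  next
    assume c: "s1 = [k,k+1]"
    show ?thesis using c s(1) s(3) R h(2,3) by (auto intro: L0 Lk Lk1)
  next
    assume c: "s1 = [1,k+1]"
    show ?thesis using c s(1) s(3) R h(2,3) by (auto intro: L0 Lk Lk1)
  next
    assume c: "s1 = [k,1,k+1]"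
    show ?thesis using c s(1) s(3) R h(2,3) by (auto intro: L0 Lk Lk1)
  qed
  then show ?thesis
  proof
    assume "subseq [a,b,c] (k#1#r)" then show ?thesis using h unfolding h321_def by blast
  next
    assume "a = k+1 \<and> subseq [k,b,c] (k#1#r) \<and> b < k"
    then show ?thesis using h unfolding h321_def by blast
  qed
qed

lemma insC5:
  assumes r: "\<forall>v\<in>set r. v \<noteq> k \<and> v \<noteq> k+1 \<and> 1 < v" and H: "h5 (k#1#(k+1)#r)"
  shows "h5 (k#1#r)"
proof -
  obtain a b c d e where h: "subseq [a,b,c,d,e] (k#1#(k+1)#r)" "b < d" "d < a" "a < e" "e < c"
    using H unfolding h5_def by blast
  obtain s1 s2 where s: "[a,b,c,d,e] = s1 @ s2" "s1 = [] \<or> s1 = [k] \<or> s1 = [1] \<or> s1 = [k+1] \<or> s1 = [k,1] \<or> s1 = [k,k+1]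
     \<or> s1 = [1,k+1] \<or> s1 = [k,1,k+1]" "subseq s2 r"
    using subseq_pref3[OF h(1)] by blast
  have R: "\<forall>v\<in>set s2. v \<noteq> k \<and> v \<noteq> k+1 \<and> 1 < v" using subseq_set[OF s(3)] r by blast
  have "subseq [a,b,c,d,e] (k#1#r) \<or> (a = k+1 \<and> subseq [k,b,c,d,e] (k#1#r) \<and> d < k)"
    using s(2)
  proof (elim disjE)
    assume c: "s1 = []"
    show ?thesis using c s(1) s(3) R h(2-5) by (auto intro: L0 Lk Lk1)
  next
    assume c: "s1 = [k]"
    show ?thesis using c s(1) s(3) R h(2-5) by (auto intro: L0 Lk Lk1)
  next
    assume c: "s1 = [1]"
    show ?thesis using c s(1) s(3) R h(2-5) by (auto intro: L0 Lk Lk1)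
  next
    assume c: "s1 = [k+1]"
    show ?thesis using c s(1) s(3) R h(2-5) by (auto intro: L0 Lk Lk1)
  next
    assume c: "s1 = [k,1]"
    show ?thesis using c s(1) s(3) R h(2-5) by (auto intro: L0 Lk Lk1)
  next
    assume c: "s1 = [k,k+1]"
    show ?thesis using c s(1) s(3) R h(2-5) by (auto intro: L0 Lk Lk1)
  next
    assume c: "s1 = [1,k+1]"
    show ?thesis using c s(1) s(3) R h(2-5) by (auto intro: L0 Lk Lk1)
  next
    assume c: "s1 = [k,1,k+1]"
    show ?thesis using c s(1) s(3) R h(2-5) by (auto intro: L0 Lk Lk1)
  qed
  then show ?thesis
  proof
    assume "subseq [a,b,c,d,e] (k#1#r)" then show ?thesis using h unfolding h5_def by blast
  next
    assume A: "a = k+1 \<and> subseq [k,b,c,d,e] (k#1#r) \<and> d < k"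
    then have "subseq [k,b,c,d,e] (k#1#r)" "d < k" by simp_all
    moreover have "k < e" "b < d" "e < c" using h A by simp_all
    ultimately show ?thesis unfolding h5_def by blast
  qed
qed



definition Fs :: "nat \<Rightarrow> nat list set" where
  "Fs n = {p. is_perm n p \<and> fsh p \<and> \<not> h321 p \<and> \<not> h5 p}"

lemma F_Fs: "F n [[3,2,1],[3,1,5,2,4]] = Fs n"
  unfolding F_def Fs_def avoids_def
  by (simp only: list.set ball_simps contains321 contains5 fishburn_fsh) blast

lemma perm_intro:
  assumes "length p = n" "distinct p" "set p \<subseteq> {1..n}"
  shows "is_perm n p"
proof -
  have "card (set p) = n" using assms(1,2) distinct_card by metis
  then have "set p = {1..n}" using assms(3) by (intro card_subset_eq) auto
  then show ?thesis unfolding is_perm_def using assms by blast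
qed

lemma Fs_finite: "finite (Fs n)"
proof -
  have "Fs n \<subseteq> {p. set p \<subseteq> {1..n} \<and> length p = n}" unfolding Fs_def is_perm_def by auto
  moreover have "finite {p. set p \<subseteq> {1..n} \<and> length p = n}"
    by (rule finite_lists_length_eq) simp
  ultimately show ?thesis by (rule finite_subset)
qed

lemma FsD:
  assumes "p \<in> Fs n"
  shows "length p = n" "distinct p" "set p = {1..n}" "fsh p" "\<not> h321 p" "\<not> h5 p"
  using assms unfolding Fs_def is_perm_def by auto

lemma fsh_tl: "fsh (x # xs) \<Longrightarrow> fsh xs"
  by (simp add: fsh_Cons)

lemma fsh_shift: "fsh (map (\<lambda>v. v + m) xs) \<longleftrightarrow> fsh xs"
  by (rule fsh_map) auto

lemma DS:
  assumes c: "c \<in> Fs m"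
  shows "c @ map (\<lambda>v. v + m) \<sigma> \<in> Fs (m + l) \<longleftrightarrow> \<sigma> \<in> Fs l"
proof -
  note cD = FsD[OF c]
  let ?B = "map (\<lambda>v. v + m) \<sigma>"
  have h321B: "h321 ?B \<longleftrightarrow> h321 \<sigma>" by (rule h321_map) auto
  have h5B: "h5 ?B \<longleftrightarrow> h5 \<sigma>" by (rule h5_map) auto
  show ?thesis
  proof
    assume P: "c @ ?B \<in> Fs (m + l)"
    note pD = FsD[OF P]
    have disj: "set c \<inter> set ?B = {}" using pD(2) by simp
    have sepB: "\<forall>y\<in>set ?B. m < y"
    proof
      fix y assume y: "y \<in> set ?B"
      then have "y \<in> set (c @ ?B)" by simp
      then have "y \<in> {1..m+l}" unfolding pD(3) .
      moreover have "y \<notin> {1..m}" using y disj cD(3) by auto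
      ultimately show "m < y" by auto
    qed
    have sep: "\<forall>x\<in>set c. \<forall>y\<in>set ?B. x < y" using sepB cD(3) by fastforce
    have len: "length \<sigma> = l" using pD(1) cD(1) by simp
    have dist: "distinct \<sigma>" using pD(2) by (simp add: distinct_map)
    have sub: "set \<sigma> \<subseteq> {1..l}"
    proof
      fix v assume v: "v \<in> set \<sigma>"
      then have "v + m \<in> set ?B" by simp
      then have "v + m \<in> set (c @ ?B)" by simp
      then have "v + m \<in> {1..m+l}" unfolding pD(3) .
      moreover have "m < v + m" using \<open>v + m \<in> set ?B\<close> sepB by blast
      ultimately
      show "v \<in> {1..l}" by auto
    qed
    have "fsh ?B" using pD(4) fsh_append[OF sep] by simp
    then have "fsh \<sigma>" using fsh_shift by simp
    moreover have "\<not> h321 \<sigma>" using pD(5) h321_append[OF sep] h321B by simp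
    moreover have "\<not> h5 \<sigma>" using pD(6) h5_append[OF sep] h5B by simp
    ultimately show "\<sigma> \<in> Fs l" unfolding Fs_def using perm_intro[OF len dist sub] by blast
  next
    assume S: "\<sigma> \<in> Fs l"
    note sD = FsD[OF S]
    have sepB: "\<forall>y\<in>set ?B. m < y" using sD(3) by auto
    have sep: "\<forall>x\<in>set c. \<forall>y\<in>set ?B. x < y" using sepB cD(3) by fastforce
    have len: "length (c @ ?B) = m + l" using sD(1) cD(1) by simp
    have dist: "distinct (c @ ?B)" using cD(2) sD(2) sep by (auto simp: distinct_map)
    have sub: "set (c @ ?B) \<subseteq> {1..m+l}" using cD(3) sD(3) by auto
    have "fsh (c @ ?B)" using fsh_append[OF sep] cD(4) sD(4) fsh_shift by simp
    moreover have "\<not> h321 (c @ ?B)" using h321_append[OF sep] cD(5) sD(5) h321B by simp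
    moreover have "\<not> h5 (c @ ?B)" using h5_append[OF sep] cD(6) sD(6) h5B by simp
    ultimately show "c @ ?B \<in> Fs (m + l)" unfolding Fs_def using perm_intro[OF len dist sub] by blast
  qed
qed

lemma DSimg:
  assumes c: "c \<in> Fs m"
  shows "{p \<in> Fs (m + l). \<exists>r. p = c @ r} = (\<lambda>\<sigma>. c @ map (\<lambda>v. v + m) \<sigma>) ` Fs l"
proof
  show "(\<lambda>\<sigma>. c @ map (\<lambda>v. v + m) \<sigma>) ` Fs l \<subseteq> {p \<in> Fs (m + l). \<exists>r. p = c @ r}"
    using DS[OF c] by auto
next
  show "{p \<in> Fs (m + l). \<exists>r. p = c @ r} \<subseteq> (\<lambda>\<sigma>. c @ map (\<lambda>v. v + m) \<sigma>) ` Fs l"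
  proof
    fix p assume "p \<in> {p \<in> Fs (m + l). \<exists>r. p = c @ r}"
    then obtain r where P: "p \<in> Fs (m + l)" "p = c @ r" by blast
    note pD = FsD[OF P(1)] and cD = FsD[OF c]
    have "\<forall>v\<in>set r. m < v"
    proof
      fix v assume v: "v \<in> set r"
      then have "v \<in> {1..m+l}" using pD(3) P(2) by auto
      moreover have "v \<notin> set c" using v pD(2) P(2) by auto
      ultimately show "m < v" using cD(3) by auto
    qed
    then have r: "r = map (\<lambda>v. v + m) (map (\<lambda>v. v - m) r)"
      by (induction r) auto
    then have "c @ map (\<lambda>v. v + m) (map (\<lambda>v. v - m) r) \<in> Fs (m + l)" using P by simp
    then have "map (\<lambda>v. v - m) r \<in> Fs l" using DS[OF c] by blast
    then show "p \<in> (\<lambda>\<sigma>. c @ map (\<lambda>v. v + m) \<sigma>) ` Fs l" using P(2) r by blast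
  qed
qed

lemma DScard:
  assumes c: "c \<in> Fs m"
  shows "card {p \<in> Fs (m + l). \<exists>r. p = c @ r} = card (Fs l)"
proof -
  have "inj_on (\<lambda>\<sigma>. c @ map (\<lambda>v. v + m) \<sigma>) (Fs l)"
    by (rule inj_onI) (simp add: inj_map_eq_map inj_def)
  then show ?thesis unfolding DSimg[OF c] by (rule card_image)
qed

lemma c1: "[1] \<in> Fs 1"
  unfolding Fs_def is_perm_def h321_def h5_def by auto

lemma c2: "[2,1] \<in> Fs 2"
  unfolding Fs_def is_perm_def h321_def h5_def by auto

lemma c3: "[3,1,2] \<in> Fs 3"
proof -
  have "\<not> h321 [3,1,2]" unfolding h321_def
  proof
    assume "\<exists>a b c. subseq [a, b, c] [3::nat, 1, 2] \<and> b < a \<and> c < b"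
    then obtain a b c where "subseq [a, b, c] [3::nat, 1, 2]" "b < a" "c < b" by blast
    moreover have "[a,b,c] = [3,1,2]" using subseq_same_length calculation(1) by fastforce
    ultimately show False by simp
  qed
  moreover have "\<not> h5 [3,1,2]" unfolding h5_def by auto
  moreover have "is_perm 3 [3,1,2]" unfolding is_perm_def by auto
  ultimately show ?thesis unfolding Fs_def by simp
qed



lemma two_order: "a \<in> set L \<Longrightarrow> b \<in> set L \<Longrightarrow> a \<noteq> b \<Longrightarrow> subseq [a,b] L \<or> subseq [b,a] L"
proof (induction L)
  case Nil then show ?case by simp
next
  case (Cons x L)
  show ?case
  proof (cases "x = a")
    case True
    then have "b \<in> set L" using Cons.prems by auto
    then have "subseq [a,b] (x # L)" using True by (simp add: subseq_singleton_left)
    then show ?thesis by blast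
  next
    case False
    show ?thesis
    proof (cases "x = b")
      case True
      then have "a \<in> set L" using Cons.prems False by auto
      then have "subseq [b,a] (x # L)" using True by (simp add: subseq_singleton_left)
      then show ?thesis by blast
    next
      case False2: False
      then have "a \<in> set L" "b \<in> set L" using Cons.prems False by auto
      then have "subseq [a,b] L \<or> subseq [b,a] L" using Cons.IH Cons.prems(3) by blast
      then show ?thesis by (meson list_emb_Cons)
    qed
  qed
qed

lemma L3c: "subseq s ws \<Longrightarrow> subseq (a#b#c#s) (a#b#c#ws)"
  by (intro list_emb_Cons2) auto

lemma L2c: "subseq s ws \<Longrightarrow> subseq (c#s) (a#b#c#ws)"
  by (intro list_emb_Cons list_emb_Cons2) auto

lemma struct2:
  assumes P: "2 # xs \<in> Fs n"
  shows "\<exists>ys. xs = 1 # ys"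
proof -
  note pD = FsD[OF P]
  have "1 \<in> set (2 # xs)" using pD(3) pD(1) by auto
  then have one: "1 \<in> set xs" by auto
  then obtain z ys where xs: "xs = z # ys" by (cases xs) auto
  have "z \<noteq> 2" using pD(2) xs by auto
  have "z \<ge> 1" using pD(3) xs by auto
  moreover have "\<not> 2 < z"
  proof
    assume "2 < z"
    then have "\<forall>w\<in>set xs. w + 1 \<noteq> 2" using pD(4) xs by (simp add: fsh_Cons)
    then show False using one by auto
  qed
  ultimately have "z = 1" using \<open>z \<noteq> 2\<close> by auto
  then show ?thesis using xs by blast
qed

lemma structK:
  assumes P: "k # xs \<in> Fs n" and k: "3 \<le> k"
  shows "\<exists>y ys. xs = 1 # y # ys \<and> (y = 2 \<or> y = k + 1)"
proof -
  note pD = FsD[OF P]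
  have kn: "k \<le> n" using pD(3) by auto
  have "k - 1 \<in> set (k # xs)" unfolding pD(3) using k kn by auto
  then have km: "k - 1 \<in> set xs" using k by auto
  have "1 \<in> set (k # xs)" unfolding pD(3) using k kn by auto
  then have one: "1 \<in> set xs" using k by auto
  obtain z ys where xs: "xs = z # ys" using km by (cases xs) auto
  have "z \<noteq> k" using pD(2) xs by auto
  have "z \<ge> 1" using pD(3) xs by auto
  have zk: "z < k"
  proof (rule ccontr)
    assume "\<not> z < k"
    then have "k < z" using \<open>z \<noteq> k\<close> by simp
    then have "\<forall>w\<in>set xs. w + 1 \<noteq> k" using pD(4) xs by (simp add: fsh_Cons)
    then show False using km k by fastforce
  qed
  have z1: "z = 1"
  proof (rule ccontr)
    assume "z \<noteq> 1"
    then have "1 \<in> set ys" using one xs by auto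
    then have "subseq [k, z, 1] (k # xs)" using xs by (simp add: subseq_singleton_left)
    moreover have "1 < z" using \<open>z \<ge> 1\<close> \<open>z \<noteq> 1\<close> by simp
    ultimately have "h321 (k # xs)" using zk unfolding h321_def by blast
    then show False using pD(5) by simp
  qed
  have "k - 1 \<noteq> 1" using k by simp
  then have km2: "k - 1 \<in> set ys" using km xs z1 by auto
  then obtain y ws where ys: "ys = y # ws" by (cases ys) auto
  have pe: "k # xs = k # 1 # y # ws" using xs z1 ys by simp
  have yk: "y \<noteq> k" "y \<noteq> 1" using pD(2) pe by auto
  have "y \<ge> 1" using pD(3) pe by auto
  have "y = 2 \<or> y = k + 1"
  proof (cases "y < k")
    case True
    show ?thesis
    proof (rule ccontr)
      assume "\<not> (y = 2 \<or> y = k + 1)"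
      then have "y \<noteq> 2" by simp
      have "2 \<in> set (k # xs)" unfolding pD(3) using k kn by auto
      then have "2 \<in> set ws" using pe yk \<open>y \<noteq> 2\<close> k by auto
      then have "subseq [k, y, 2] (k # xs)" unfolding pe using yk
        by (simp add: subseq_singleton_left)
      moreover have "2 < y" using \<open>y \<ge> 1\<close> yk \<open>y \<noteq> 2\<close> by simp
      ultimately have "h321 (k # xs)" using True unfolding h321_def by blast
      then show False using pD(5) by simp
    qed
  next
    case False
    then have ky: "k < y" using yk by simp
    show ?thesis
    proof (rule ccontr)
      assume "\<not> (y = 2 \<or> y = k + 1)"
      then have "y \<noteq> k + 1" by simp
      have "y \<le> n" using pD(3) pe by (metis atLeastAtMost_iff list.set_intros(1) list.set_intros(2))
      then have "k + 1 \<in> set (k # xs)" unfolding pD(3) using ky by auto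
      then have kp: "k + 1 \<in> set ws" using pe \<open>y \<noteq> k + 1\<close> k by auto
      have kmw: "k - 1 \<in> set ws" using km2 ys ky by auto
      have "k - 1 \<noteq> k + 1" by simp
      then have "subseq [k - 1, k + 1] ws \<or> subseq [k + 1, k - 1] ws" using two_order[OF kmw kp] by blast
      then show False
      proof
        assume "subseq [k - 1, k + 1] ws"
        then have "subseq [k, 1, y, k - 1, k + 1] (k # xs)" unfolding pe by (rule L3c)
        moreover have "1 < k - 1" "k - 1 < k" "k < k + 1" "k + 1 < y"
          using k ky \<open>y \<noteq> k + 1\<close> by auto
        ultimately have "h5 (k # xs)" unfolding h5_def by blast
        then show False using pD(6) by simp
      next
        assume "subseq [k + 1, k - 1] ws"
        then have "subseq [y, k + 1, k - 1] (k # xs)" unfolding pe by (rule L2c)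
        moreover have "k + 1 < y" "k - 1 < k + 1" using ky \<open>y \<noteq> k + 1\<close> by auto
        ultimately have "h321 (k # xs)" unfolding h321_def by blast
        then show False using pD(5) by simp
      qed
    qed
  qed
  then show ?thesis using pe by auto
qed



lemma Lins: "subseq (a#b#r) (a#b#c#r)"
  by (intro list_emb_Cons2 list_emb_Cons) (auto intro: subseq_order.order_refl)

lemma valsD:
  assumes "xs \<in> Fs n" "v \<in> set xs"
  shows "1 \<le> v" "v \<le> n"
  using FsD(3)[OF assms(1)] assms(2) by auto

lemma FB:
  assumes Q: "j#1#r \<in> Fs m" and j: "3 \<le> j"
  shows "Suc j # 1 # 2 # map Suc r \<in> Fs (Suc m)"
proof -
  note D = FsD[OF Q]
  have rv: "\<forall>v\<in>set r. 2 \<le> v \<and> v \<le> m \<and> v \<noteq> j"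
  proof
    fix v assume v: "v \<in> set r"
    then have "1 \<le> v" "v \<le> m" using valsD[OF Q] by auto
    moreover have "v \<noteq> 1" "v \<noteq> j" using v D(2) by auto
    ultimately show "2 \<le> v \<and> v \<le> m \<and> v \<noteq> j" by auto
  qed
  have jm: "j \<le> m" using valsD[OF Q, of j] by simp
  have len: "length (Suc j # 1 # 2 # map Suc r) = Suc m" using D(1) by simp
  have dist: "distinct (Suc j # 1 # 2 # map Suc r)" using D(2) rv j by (auto simp: distinct_map)
  have sub: "set (Suc j # 1 # 2 # map Suc r) \<subseteq> {1..Suc m}" using rv jm j by auto
  have "fsh r" using D(4) fsh_tl by blast
  then have "fsh (map Suc r)" using fsh_map[of r Suc] by simp
  then have F: "fsh (Suc j # 1 # 2 # map Suc r)" using rv by (auto simp: fsh_Cons)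
  have eq: "Suc j # 1 # map Suc r = map (\<lambda>v. if v = 1 then 1 else Suc v) (j#1#r)"
  proof -
    have "\<forall>v\<in>set r. v \<noteq> 1" using rv by force
    then show ?thesis using j by simp
  qed
  have ord: "\<forall>x\<in>set (j#1#r). \<forall>y\<in>set (j#1#r). (\<lambda>v. if v = 1 then 1 else Suc v) x < (\<lambda>v. if v = 1 then 1 else Suc v) y \<longleftrightarrow> x < y"
  proof (intro ballI)
    fix x y assume xy: "x \<in> set (j#1#r)" "y \<in> set (j#1#r)"
    have "1 \<le> x" "1 \<le> y" using valsD[OF Q] xy by blast+
    then show "(\<lambda>v. if v = 1 then 1 else Suc v) x < (\<lambda>v. if v = 1 then 1 else Suc v) y \<longleftrightarrow> x < y"
      by auto
  qed
  have rg: "\<forall>v\<in>set (map Suc r). 2 < v" using rv by auto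
  have N1: "\<not> h321 (Suc j # 1 # 2 # map Suc r)"
  proof
    assume "h321 (Suc j # 1 # 2 # map Suc r)"
    then have "h321 (Suc j # 1 # map Suc r)" using insB321[OF rg] by blast
    then have "h321 (j#1#r)" unfolding eq using h321_map[OF ord] by blast
    then show False using D(5) by simp
  qed
  have N2: "\<not> h5 (Suc j # 1 # 2 # map Suc r)"
  proof
    assume "h5 (Suc j # 1 # 2 # map Suc r)"
    then have "h5 (Suc j # 1 # map Suc r)" using insB5[OF rg] by blast
    then have "h5 (j#1#r)" unfolding eq using h5_map[OF ord] by blast
    then show False using D(6) by simp
  qed
  show ?thesis unfolding Fs_def using perm_intro[OF len dist sub] F N1 N2 by blast
qed

lemma GB:
  assumes P: "k#1#2#r \<in> Fs n" and k: "4 \<le> k"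
  shows "(k - 1) # 1 # map (\<lambda>v. v - 1) r \<in> Fs (n - 1)"
proof -
  note D = FsD[OF P]
  have rv: "\<forall>v\<in>set r. 3 \<le> v \<and> v \<le> n \<and> v \<noteq> k"
  proof
    fix v assume v: "v \<in> set r"
    then have "1 \<le> v" "v \<le> n" using valsD[OF P] by auto
    moreover have "v \<noteq> 1" "v \<noteq> 2" "v \<noteq> k" using v D(2) by auto
    ultimately show "3 \<le> v \<and> v \<le> n \<and> v \<noteq> k" by auto
  qed
  have kn: "k \<le> n" using valsD[OF P, of k] by simp
  have len: "length ((k - 1) # 1 # map (\<lambda>v. v - 1) r) = n - 1" using D(1) by simp
  have inj: "inj_on (\<lambda>v. v - 1) (set r)" using rv by (intro inj_onI) force
  have dist: "distinct ((k - 1) # 1 # map (\<lambda>v. v - 1) r)"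
  proof -
    have "k - 1 \<notin> (\<lambda>v. v - 1) ` set r" using rv k by force
    moreover have "1 \<notin> (\<lambda>v. v - 1) ` set r" using rv by force
    moreover have "distinct (map (\<lambda>v. v - 1) r)" using D(2) inj by (simp add: distinct_map)
    ultimately show ?thesis using k by auto
  qed
  have sub: "set ((k - 1) # 1 # map (\<lambda>v. v - 1) r) \<subseteq> {1..n - 1}"
  proof
    fix x assume x: "x \<in> set ((k - 1) # 1 # map (\<lambda>v. v - 1) r)"
    then consider "x = k - 1" | "x = 1" | "\<exists>v\<in>set r. x = v - 1" by auto
    then show "x \<in> {1..n - 1}"
    proof cases
      case 3
      then obtain v where v: "v \<in> set r" "x = v - 1" by blast
      then show ?thesis using rv[rule_format, OF v(1)] by simp arith
    qed (use kn k in auto)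
  qed
  have "fsh r" using D(4) fsh_tl by blast
  moreover have "\<forall>x\<in>set r. \<forall>y\<in>set r. ((x - 1) < (y - 1) \<longleftrightarrow> x < y) \<and> ((x - 1) + 1 = (y - 1) \<longleftrightarrow> x + 1 = y)"
    using rv by fastforce
  ultimately have "fsh (map (\<lambda>v. v - 1) r)" using fsh_map[of r "\<lambda>v. v - 1"] by simp
  then have F: "fsh ((k - 1) # 1 # map (\<lambda>v. v - 1) r)" using rv k by (auto simp: fsh_Cons)
  have eq: "(k - 1) # 1 # map (\<lambda>v. v - 1) r = map (\<lambda>v. if v \<le> 1 then v else v - 1) (k#1#r)"
  proof -
    have "\<forall>v\<in>set r. \<not> v \<le> 1" using rv by force
    then show ?thesis using k by simp
  qed
  have ord: "\<forall>x\<in>set (k#1#r). \<forall>y\<in>set (k#1#r). (\<lambda>v. if v \<le> 1 then v else v - 1) x < (\<lambda>v. if v \<le> 1 then v else v - 1) y \<longleftrightarrow> x < y"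
  proof (intro ballI)
    fix x y assume xy: "x \<in> set (k#1#r)" "y \<in> set (k#1#r)"
    have A: "\<forall>x\<in>set (k#1#r). x = 1 \<or> 3 \<le> x" using rv k by auto
    have "x = 1 \<or> 3 \<le> x" "y = 1 \<or> 3 \<le> y" using A xy by blast+
    then show "(\<lambda>v. if v \<le> 1 then v else v - 1) x < (\<lambda>v. if v \<le> 1 then v else v - 1) y \<longleftrightarrow> x < y"
      by auto
  qed
  have N1: "\<not> h321 ((k - 1) # 1 # map (\<lambda>v. v - 1) r)"
  proof
    assume "h321 ((k - 1) # 1 # map (\<lambda>v. v - 1) r)"
    then have "h321 (k#1#r)" unfolding eq using h321_map[OF ord] by blast
    then have "h321 (k#1#2#r)" using h321_mono[OF Lins] by blast
    then show False using D(5) by simp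
  qed
  have N2: "\<not> h5 ((k - 1) # 1 # map (\<lambda>v. v - 1) r)"
  proof
    assume "h5 ((k - 1) # 1 # map (\<lambda>v. v - 1) r)"
    then have "h5 (k#1#r)" unfolding eq using h5_map[OF ord] by blast
    then have "h5 (k#1#2#r)" using h5_mono[OF Lins] by blast
    then show False using D(6) by simp
  qed
  show ?thesis unfolding Fs_def using perm_intro[OF len dist sub] F N1 N2 by blast
qed

lemma FC:
  assumes Q: "j#1#r \<in> Fs m" and j: "3 \<le> j"
  shows "j # 1 # Suc j # map (\<lambda>v. if j < v then Suc v else v) r \<in> Fs (Suc m)"
proof -
  note D = FsD[OF Q]
  let ?u = "\<lambda>v. if j < v then Suc v else v"
  have rv: "\<forall>v\<in>set r. 2 \<le> v \<and> v \<le> m \<and> v \<noteq> j"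
  proof
    fix v assume v: "v \<in> set r"
    then have "1 \<le> v" "v \<le> m" using valsD[OF Q] by auto
    moreover have "v \<noteq> 1" "v \<noteq> j" using v D(2) by auto
    ultimately show "2 \<le> v \<and> v \<le> m \<and> v \<noteq> j" by auto
  qed
  have jm: "j \<le> m" using valsD[OF Q, of j] by simp
  have len: "length (j # 1 # Suc j # map ?u r) = Suc m" using D(1) by simp
  have inj: "inj ?u"
  proof (rule injI)
    fix x y assume "?u x = ?u y"
    then show "x = y" by (cases "j < x"; cases "j < y") auto
  qed
  have dist: "distinct (j # 1 # Suc j # map ?u r)"
  proof -
    have "\<forall>z\<in>?u ` set r. z \<noteq> j \<and> z \<noteq> 1 \<and> z \<noteq> Suc j"
    proof
      fix z assume "z \<in> ?u ` set r"
      then obtain v where v: "v \<in> set r" "z = ?u v" by blast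
      have "2 \<le> v" "v \<noteq> j" using rv[rule_format, OF v(1)] by auto
      then show "z \<noteq> j \<and> z \<noteq> 1 \<and> z \<noteq> Suc j" using v(2) by (cases "j < v") auto
    qed
    then have "j \<notin> ?u ` set r" "1 \<notin> ?u ` set r" "Suc j \<notin> ?u ` set r" by blast+
    moreover have "inj_on ?u (set r)" by (rule inj_on_subset[OF inj]) simp
    then have "distinct (map ?u r)" using D(2) by (simp add: distinct_map)
    ultimately show ?thesis using j by simp
  qed
  have sub: "set (j # 1 # Suc j # map ?u r) \<subseteq> {1..Suc m}"
  proof
    fix x assume x: "x \<in> set (j # 1 # Suc j # map ?u r)"
    then consider "x = j" | "x = 1" | "x = Suc j" | "\<exists>v\<in>set r. x = ?u v"
      by (simp only: list.set insert_iff set_map image_iff) blast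
    then show "x \<in> {1..Suc m}"
    proof cases
      case 4
      then obtain v where v: "v \<in> set r" "x = ?u v" by blast
      have "2 \<le> v" "v \<le> m" using rv[rule_format, OF v(1)] by auto
      then show ?thesis using v(2) by (cases "j < v") auto
    qed (use jm j in auto)
  qed
  have "fsh r" using D(4) fsh_tl by blast
  moreover have "\<forall>x\<in>set r. \<forall>y\<in>set r. (?u x < ?u y \<longleftrightarrow> x < y) \<and> (?u x + 1 = ?u y \<longleftrightarrow> x + 1 = y)"
  proof (intro ballI)
    fix x y assume xy: "x \<in> set r" "y \<in> set r"
    have "x \<noteq> j" "y \<noteq> j" using rv xy by blast+
    then show "(?u x < ?u y \<longleftrightarrow> x < y) \<and> (?u x + 1 = ?u y \<longleftrightarrow> x + 1 = y)"
      by (cases "j < x"; cases "j < y") auto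
  qed
  ultimately have "fsh (map ?u r)" using fsh_map[of r ?u] by simp
  moreover have "\<forall>z\<in>set (map ?u r). z \<noteq> j \<and> 1 < z"
  proof
    fix z assume "z \<in> set (map ?u r)"
    then obtain v where v: "v \<in> set r" "z = ?u v" by auto
    have "2 \<le> v" "v \<noteq> j" using rv[rule_format, OF v(1)] by auto
    then show "z \<noteq> j \<and> 1 < z" using v(2) by (cases "j < v") auto
  qed
  ultimately have F: "fsh (j # 1 # Suc j # map ?u r)" using j by (auto simp: fsh_Cons)
  have eq: "j # 1 # map ?u r = map ?u (j#1#r)" using j by simp
  have ord: "\<forall>x\<in>set (j#1#r). \<forall>y\<in>set (j#1#r). ?u x < ?u y \<longleftrightarrow> x < y"
  proof (intro ballI)
    fix x y show "?u x < ?u y \<longleftrightarrow> x < y" by (cases "j < x"; cases "j < y") auto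
  qed
  have rg: "\<forall>v\<in>set (map ?u r). v \<noteq> j \<and> v \<noteq> j + 1 \<and> 1 < v"
  proof
    fix z assume "z \<in> set (map ?u r)"
    then obtain v where v: "v \<in> set r" "z = ?u v" by auto
    have "2 \<le> v" "v \<noteq> j" using rv[rule_format, OF v(1)] by auto
    then show "z \<noteq> j \<and> z \<noteq> j + 1 \<and> 1 < z" using v(2) by (cases "j < v") auto
  qed
  have N1: "\<not> h321 (j # 1 # Suc j # map ?u r)"
  proof
    assume "h321 (j # 1 # Suc j # map ?u r)"
    then have "h321 (j # 1 # map ?u r)" using insC321[OF rg] by simp
    then have "h321 (j#1#r)" unfolding eq using h321_map[OF ord] by blast
    then show False using D(5) by simp
  qed
  have N2: "\<not> h5 (j # 1 # Suc j # map ?u r)"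
  proof
    assume "h5 (j # 1 # Suc j # map ?u r)"
    then have "h5 (j # 1 # map ?u r)" using insC5[OF rg] by simp
    then have "h5 (j#1#r)" unfolding eq using h5_map[OF ord] by blast
    then show False using D(6) by simp
  qed
  show ?thesis unfolding Fs_def using perm_intro[OF len dist sub] F N1 N2 by blast
qed

lemma GC:
  assumes P: "k#1#Suc k#r \<in> Fs n" and k: "3 \<le> k"
  shows "k # 1 # map (\<lambda>v. if Suc k < v then v - 1 else v) r \<in> Fs (n - 1)"
proof -
  note D = FsD[OF P]
  let ?w = "\<lambda>v. if Suc k < v then v - 1 else v"
  have rv: "\<forall>v\<in>set r. 2 \<le> v \<and> v \<le> n \<and> v \<noteq> k \<and> v \<noteq> Suc k"
  proof
    fix v assume v: "v \<in> set r"
    then have "1 \<le> v" "v \<le> n" using valsD[OF P] by auto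
    moreover have "v \<noteq> 1" "v \<noteq> k" "v \<noteq> Suc k" using v D(2) by auto
    ultimately show "2 \<le> v \<and> v \<le> n \<and> v \<noteq> k \<and> v \<noteq> Suc k" by auto
  qed
  have kn: "Suc k \<le> n" using valsD[OF P, of "Suc k"] by simp
  have len: "length (k # 1 # map ?w r) = n - 1" using D(1) by simp
  have inj: "inj_on ?w (set r)"
  proof (rule inj_onI)
    fix x y assume xy: "x \<in> set r" "y \<in> set r" "?w x = ?w y"
    have "x \<noteq> Suc k" "y \<noteq> Suc k" using rv xy(1,2) by blast+
    then show "x = y" using xy(3) by (cases "Suc k < x"; cases "Suc k < y") auto
  qed
  have dist: "distinct (k # 1 # map ?w r)"
  proof -
    have "k \<notin> ?w ` set r"
    proof
      assume "k \<in> ?w ` set r"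
      then obtain v where v: "v \<in> set r" "k = ?w v" by blast
      have "v \<noteq> k" "v \<noteq> Suc k" using rv[rule_format, OF v(1)] by auto
      then show False using v(2) by (cases "Suc k < v") auto
    qed
    moreover have "1 \<notin> ?w ` set r"
    proof
      assume "1 \<in> ?w ` set r"
      then obtain v where v: "v \<in> set r" "1 = ?w v" by blast
      have "2 \<le> v" using rv[rule_format, OF v(1)] by auto
      then show False using v(2) k by (cases "Suc k < v") auto
    qed
    moreover have "distinct (map ?w r)" using D(2) inj by (simp add: distinct_map)
    ultimately show ?thesis using k by simp
  qed
  have sub: "set (k # 1 # map ?w r) \<subseteq> {1..n - 1}"
  proof
    fix x assume x: "x \<in> set (k # 1 # map ?w r)"
    then consider "x = k" | "x = 1" | "\<exists>v\<in>set r. x = ?w v"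
      by (simp only: list.set insert_iff set_map image_iff) blast
    then show "x \<in> {1..n - 1}"
    proof cases
      case 3
      then obtain v where v: "v \<in> set r" "x = ?w v" by blast
      have "2 \<le> v" "v \<le> n" "v \<noteq> k" "v \<noteq> Suc k" using rv[rule_format, OF v(1)] by auto
      then show ?thesis using v(2) kn by (cases "Suc k < v") auto
    qed (use kn k in auto)
  qed
  have "fsh r" using D(4) fsh_tl by blast
  moreover have "\<forall>x\<in>set r. \<forall>y\<in>set r. (?w x < ?w y \<longleftrightarrow> x < y) \<and> (?w x + 1 = ?w y \<longleftrightarrow> x + 1 = y)"
  proof (intro ballI)
    fix x y assume xy: "x \<in> set r" "y \<in> set r"
    have "x \<noteq> k" "y \<noteq> k" "x \<noteq> Suc k" "y \<noteq> Suc k" using rv xy by blast+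
    then show "(?w x < ?w y \<longleftrightarrow> x < y) \<and> (?w x + 1 = ?w y \<longleftrightarrow> x + 1 = y)"
      by (cases "Suc k < x"; cases "Suc k < y") auto
  qed
  ultimately have "fsh (map ?w r)" using fsh_map[of r ?w] by simp
  moreover have "\<forall>z\<in>set (map ?w r). 1 < z"
  proof
    fix z assume "z \<in> set (map ?w r)"
    then obtain v where v: "v \<in> set r" "z = ?w v" by auto
    have "2 \<le> v" using rv[rule_format, OF v(1)] by auto
    then show "1 < z" using v(2) k by (cases "Suc k < v") auto
  qed
  ultimately have F: "fsh (k # 1 # map ?w r)" using k by (auto simp: fsh_Cons)
  have eq: "k # 1 # map ?w r = map ?w (k#1#r)" using k by simp
  have ord: "\<forall>x\<in>set (k#1#r). \<forall>y\<in>set (k#1#r). ?w x < ?w y \<longleftrightarrow> x < y"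
  proof (intro ballI)
    fix x y assume xy: "x \<in> set (k#1#r)" "y \<in> set (k#1#r)"
    have A: "\<forall>x\<in>set (k#1#r). x \<noteq> Suc k"
    proof
      fix x assume "x \<in> set (k#1#r)"
      then have "x = k \<or> x = 1 \<or> x \<in> set r" by simp
      then show "x \<noteq> Suc k"
      proof (elim disjE)
        assume "x \<in> set r" then show ?thesis using rv by blast
      qed (use k in simp_all)
    qed
    have "x \<noteq> Suc k" "y \<noteq> Suc k" using A xy by blast+
    then show "?w x < ?w y \<longleftrightarrow> x < y" by (cases "Suc k < x"; cases "Suc k < y") auto
  qed
  have sq: "subseq (k#1#r) (k#1#Suc k#r)" by (rule Lins)
  have N1: "\<not> h321 (k # 1 # map ?w r)"
  proof
    assume "h321 (k # 1 # map ?w r)"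
    then have "h321 (k#1#r)" unfolding eq using h321_map[OF ord] by blast
    then have "h321 (k#1#Suc k#r)" using h321_mono[OF sq] by blast
    then show False using D(5) by simp
  qed
  have N2: "\<not> h5 (k # 1 # map ?w r)"
  proof
    assume "h5 (k # 1 # map ?w r)"
    then have "h5 (k#1#r)" unfolding eq using h5_map[OF ord] by blast
    then have "h5 (k#1#Suc k#r)" using h5_mono[OF sq] by blast
    then show False using D(6) by simp
  qed
  show ?thesis unfolding Fs_def using perm_intro[OF len dist sub] F N1 N2 by blast
qed



definition T :: "nat \<Rightarrow> nat list set" where
  "T n = {p \<in> Fs n. \<exists>k r. 3 \<le> k \<and> p = k # r}"

lemma T_form:
  assumes "q \<in> T m"
  shows "\<exists>j r. 3 \<le> j \<and> q = j # 1 # r \<and> j # 1 # r \<in> Fs m"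
proof -
  obtain k xs where q: "q \<in> Fs m" "3 \<le> k" "q = k # xs" using assms unfolding T_def by blast
  then obtain y ys where "xs = 1 # y # ys" using structK by blast
  then show ?thesis using q by blast
qed

definition fB :: "nat list \<Rightarrow> nat list" where
  "fB q = Suc (hd q) # 1 # 2 # map Suc (drop 2 q)"
definition gB :: "nat list \<Rightarrow> nat list" where
  "gB p = (hd p - 1) # 1 # map (\<lambda>v. v - 1) (drop 3 p)"
definition fC :: "nat list \<Rightarrow> nat list" where
  "fC q = hd q # 1 # Suc (hd q) # map (\<lambda>v. if hd q < v then Suc v else v) (drop 2 q)"
definition gC :: "nat list \<Rightarrow> nat list" where
  "gC p = hd p # 1 # map (\<lambda>v. if Suc (hd p) < v then v - 1 else v) (drop 3 p)"

definition TB :: "nat \<Rightarrow> nat list set" where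
  "TB n = {p \<in> Fs n. \<exists>k r. 4 \<le> k \<and> p = k # 1 # 2 # r}"
definition TC :: "nat \<Rightarrow> nat list set" where
  "TC n = {p \<in> Fs n. \<exists>k r. 3 \<le> k \<and> p = k # 1 # Suc k # r}"
definition TA :: "nat \<Rightarrow> nat list set" where
  "TA n = {p \<in> Fs n. \<exists>r. p = [3,1,2] @ r}"
definition S1 :: "nat \<Rightarrow> nat list set" where
  "S1 n = {p \<in> Fs n. \<exists>r. p = [1] @ r}"
definition S2 :: "nat \<Rightarrow> nat list set" where
  "S2 n = {p \<in> Fs n. \<exists>r. p = [2,1] @ r}"

lemma TB_img: "TB (Suc m) = fB ` T m"
proof
  show "TB (Suc m) \<subseteq> fB ` T m"
  proof
    fix p assume "p \<in> TB (Suc m)"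
    then obtain k r where P: "p \<in> Fs (Suc m)" "4 \<le> k" "p = k # 1 # 2 # r" unfolding TB_def by blast
    have "(k - 1) # 1 # map (\<lambda>v. v - 1) r \<in> Fs (Suc m - 1)" using GB P by blast
    then have Q: "(k - 1) # 1 # map (\<lambda>v. v - 1) r \<in> T m" unfolding T_def using P(2) by auto
    have "\<forall>v\<in>set r. 1 \<le> v" using valsD(1)[OF P(1)] P(3) by auto
    then have "map Suc (map (\<lambda>v. v - 1) r) = r" by (induction r) auto
    then have "fB ((k - 1) # 1 # map (\<lambda>v. v - 1) r) = p" unfolding fB_def using P by simp
    then show "p \<in> fB ` T m" using Q by blast
  qed
next
  show "fB ` T m \<subseteq> TB (Suc m)"
  proof
    fix p assume "p \<in> fB ` T m"
    then obtain q where q: "q \<in> T m" "p = fB q" by blast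
    then obtain j r where Q: "3 \<le> j" "q = j # 1 # r" "j # 1 # r \<in> Fs m" using T_form by blast
    have "p = Suc j # 1 # 2 # map Suc r" unfolding q(2) Q(2) fB_def by simp
    moreover have "Suc j # 1 # 2 # map Suc r \<in> Fs (Suc m)" using FB[OF Q(3) Q(1)] .
    ultimately show "p \<in> TB (Suc m)" unfolding TB_def using Q(1) by auto
  qed
qed

lemma TB_inj: "inj_on fB (T m)"
proof (rule inj_on_inverseI)
  fix q assume "q \<in> T m"
  then obtain j r where Q: "3 \<le> j" "q = j # 1 # r" using T_form by blast
  have "map (\<lambda>v. v - 1) (map Suc r) = r" by (induction r) auto
  then show "gB (fB q) = q" unfolding gB_def fB_def Q by simp
qed

lemma TC_img: "TC (Suc m) = fC ` T m"
proof
  show "TC (Suc m) \<subseteq> fC ` T m"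
  proof
    fix p assume "p \<in> TC (Suc m)"
    then obtain k r where P: "p \<in> Fs (Suc m)" "3 \<le> k" "p = k # 1 # Suc k # r" unfolding TC_def by blast
    have "k # 1 # map (\<lambda>v. if Suc k < v then v - 1 else v) r \<in> Fs (Suc m - 1)" using GC P by blast
    then have Q: "k # 1 # map (\<lambda>v. if Suc k < v then v - 1 else v) r \<in> T m" unfolding T_def using P(2) by auto
    have "\<forall>v\<in>set r. v \<noteq> k \<and> v \<noteq> Suc k" using FsD(2)[OF P(1)] P(3) by auto
    then have "map (\<lambda>v. if k < v then Suc v else v) (map (\<lambda>v. if Suc k < v then v - 1 else v) r) = r"
    proof (induction r)
      case Nil then show ?case by simp
    next
      case (Cons a r)
      then have "a \<noteq> k" "a \<noteq> Suc k" by auto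
      then have "(\<lambda>v. if k < v then Suc v else v) ((\<lambda>v. if Suc k < v then v - 1 else v) a) = a"
        by (cases "Suc k < a") auto
      then show ?case using Cons by simp
    qed
    then have "fC (k # 1 # map (\<lambda>v. if Suc k < v then v - 1 else v) r) = p" unfolding fC_def using P by simp
    then show "p \<in> fC ` T m" using Q by blast
  qed
next
  show "fC ` T m \<subseteq> TC (Suc m)"
  proof
    fix p assume "p \<in> fC ` T m"
    then obtain q where q: "q \<in> T m" "p = fC q" by blast
    then obtain j r where Q: "3 \<le> j" "q = j # 1 # r" "j # 1 # r \<in> Fs m" using T_form by blast
    have "p = j # 1 # Suc j # map (\<lambda>v. if j < v then Suc v else v) r" unfolding q(2) Q(2) fC_def by simp
    moreover have "j # 1 # Suc j # map (\<lambda>v. if j < v then Suc v else v) r \<in> Fs (Suc m)" using FC[OF Q(3) Q(1)] .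
    ultimately show "p \<in> TC (Suc m)" unfolding TC_def using Q(1) by auto
  qed
qed

lemma TC_inj: "inj_on fC (T m)"
proof (rule inj_on_inverseI)
  fix q assume "q \<in> T m"
  then obtain j r where Q: "3 \<le> j" "q = j # 1 # r" using T_form by blast
  have "map (\<lambda>v. if Suc j < v then v - 1 else v) (map (\<lambda>v. if j < v then Suc v else v) r) = r"
  proof (induction r)
    case Nil then show ?case by simp
  next
    case (Cons a r)
    have "(\<lambda>v. if Suc j < v then v - 1 else v) ((\<lambda>v. if j < v then Suc v else v) a) = a"
      by (cases "j < a") auto
    then show ?case using Cons by simp
  qed
  then show "gC (fC q) = q" unfolding gC_def fC_def Q by simp
qed

lemma card_TB: "card (TB (Suc m)) = card (T m)"
  unfolding TB_img by (rule card_image[OF TB_inj])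

lemma card_TC: "card (TC (Suc m)) = card (T m)"
  unfolding TC_img by (rule card_image[OF TC_inj])

lemma card_TA: "card (TA (m + 3)) = card (Fs m)"
proof -
  have "TA (m + 3) = {p \<in> Fs (3 + m). \<exists>r. p = [3,1,2] @ r}" unfolding TA_def by (simp add: add.commute)
  then show ?thesis using DScard[OF c3, of m] by simp
qed

lemma card_S1: "card (S1 (m + 1)) = card (Fs m)"
proof -
  have "S1 (m + 1) = {p \<in> Fs (1 + m). \<exists>r. p = [1] @ r}" unfolding S1_def by (simp add: add.commute)
  then show ?thesis using DScard[OF c1, of m] by simp
qed

lemma card_S2: "card (S2 (m + 2)) = card (Fs m)"
proof -
  have "S2 (m + 2) = {p \<in> Fs (2 + m). \<exists>r. p = [2,1] @ r}" unfolding S2_def by (simp add: add.commute)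
  then show ?thesis using DScard[OF c2, of m] by simp
qed

lemma T_split: "T n = TA n \<union> TB n \<union> TC n"
proof
  show "T n \<subseteq> TA n \<union> TB n \<union> TC n"
  proof
    fix p assume "p \<in> T n"
    then obtain k xs where P: "p \<in> Fs n" "3 \<le> k" "p = k # xs" unfolding T_def by blast
    then obtain y ys where Y: "xs = 1 # y # ys" "y = 2 \<or> y = k + 1" using structK by blast
    show "p \<in> TA n \<union> TB n \<union> TC n"
    proof (cases "y = 2")
      case True
      show ?thesis
      proof (cases "k = 3")
        case True
        then have "p \<in> TA n" unfolding TA_def using P Y \<open>y = 2\<close> by simp
        then show ?thesis by blast
      next
        case False
        then have "p \<in> TB n" unfolding TB_def using P Y \<open>y = 2\<close> by auto
        then show ?thesis by blast
      qed
    next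
      case False
      then have "p \<in> TC n" unfolding TC_def using P Y by auto
      then show ?thesis by blast
    qed
  qed
next
  show "TA n \<union> TB n \<union> TC n \<subseteq> T n" unfolding T_def TA_def TB_def TC_def by auto
qed

lemma T_disj: "TA n \<inter> TB n = {}" "(TA n \<union> TB n) \<inter> TC n = {}"
  unfolding TA_def TB_def TC_def by auto

lemma Fs_split:
  assumes "1 \<le> n"
  shows "Fs n = S1 n \<union> S2 n \<union> T n"
proof
  show "Fs n \<subseteq> S1 n \<union> S2 n \<union> T n"
  proof
    fix p assume P: "p \<in> Fs n"
    then have "length p = n" by (rule FsD)
    then obtain x xs where p: "p = x # xs" using assms by (cases p) auto
    have "1 \<le> x" using valsD(1)[OF P] p by simp
    then consider "x = 1" | "x = 2" | "3 \<le> x" by linarith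
    then show "p \<in> S1 n \<union> S2 n \<union> T n"
    proof cases
      case 1 then show ?thesis unfolding S1_def using P p by auto
    next
      case 2
      then obtain ys where "xs = 1 # ys" using struct2 P p by blast
      then show ?thesis unfolding S2_def using P p 2 by auto
    next
      case 3 then show ?thesis unfolding T_def using P p by auto
    qed
  qed
next
  show "S1 n \<union> S2 n \<union> T n \<subseteq> Fs n" unfolding S1_def S2_def T_def by auto
qed

lemma Fs_disj: "S1 n \<inter> S2 n = {}" "(S1 n \<union> S2 n) \<inter> T n = {}"
  unfolding S1_def S2_def T_def by auto

lemma T_small: "n \<le> 2 \<Longrightarrow> T n = {}"
proof -
  assume n: "n \<le> 2"
  show "T n = {}"
  proof (rule ccontr)
    assume "T n \<noteq> {}"
    then obtain p k r where "p \<in> Fs n" "3 \<le> k" "p = k # r" unfolding T_def by blast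
    then have "k \<le> n" using valsD(2) by fastforce
    then show False using n \<open>3 \<le> k\<close> by simp
  qed
qed

lemma S2_one: "S2 1 = {}"
  unfolding S2_def using FsD(1) by fastforce

lemma Fs0: "Fs 0 = {[]}"
proof -
  have "[] \<in> Fs 0" unfolding Fs_def is_perm_def h321_def h5_def by simp
  moreover have "\<forall>p\<in>Fs 0. p = []" using FsD(1) by blast
  ultimately show ?thesis by blast
qed

lemma fin: "finite (S1 n)" "finite (S2 n)" "finite (T n)" "finite (TA n)" "finite (TB n)" "finite (TC n)"
  unfolding S1_def S2_def T_def TA_def TB_def TC_def using Fs_finite by auto

lemma recA: "1 \<le> n \<Longrightarrow> card (Fs n) = card (S1 n) + card (S2 n) + card (T n)"
  using Fs_split[of n] Fs_disj[of n] fin by (simp add: card_Un_disjoint)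

lemma recT: "card (T n) = card (TA n) + card (TB n) + card (TC n)"
  using T_split[of n] T_disj[of n] fin by (simp add: card_Un_disjoint)



lemma rec_sol:
  fixes a t :: "nat \<Rightarrow> nat"
  assumes A0: "a 0 = 1" and A1: "a 1 = 1" and T0: "\<And>n. n \<le> 2 \<Longrightarrow> t n = 0"
    and RA: "\<And>n. 2 \<le> n \<Longrightarrow> a n = a (n - 1) + a (n - 2) + t n"
    and RT: "\<And>n. 3 \<le> n \<Longrightarrow> t n = a (n - 3) + 2 * t (n - 1)"
  shows "1 \<le> n \<Longrightarrow> 2 * a n = pell n + pell (n - 1) + 1 \<and> t n + 1 = a (n - 1)"
proof (induction n rule: less_induct)
  case (less n)
  have a2: "a 2 = 2" using RA[of 2] A0 A1 T0[of 2] by simp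
  have t3: "t 3 = 1" using RT[of 3] A0 T0[of 2] by simp
  have a3: "a 3 = 4" using RA[of 3] a2 A1 t3 by simp
  consider "n = 1" | "n = 2" | "n = 3" | m where "n = Suc (Suc (Suc (Suc m)))"
    using less.prems by (metis One_nat_def Suc_le_D le_SucE le_zero_eq numeral_2_eq_2 numeral_3_eq_3)
  then show ?case
  proof cases
    case 1 then show ?thesis using A0 A1 T0[of 1] by simp
  next
    case 2 then show ?thesis using a2 A1 T0[of 2] by (simp add: numeral_2_eq_2)
  next
    case 3 then show ?thesis using a3 a2 t3 by (simp add: numeral_3_eq_3 numeral_2_eq_2)
  next
    case 4
    let ?m1 = "Suc m" and ?m2 = "Suc (Suc m)" and ?m3 = "Suc (Suc (Suc m))" and ?m4 = "Suc (Suc (Suc (Suc m)))"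
    have IH3: "2 * a ?m3 = pell ?m3 + pell ?m2 + 1 \<and> t ?m3 + 1 = a ?m2"
      using less.IH[of ?m3] 4 by simp
    have IH2: "2 * a ?m2 = pell ?m2 + pell ?m1 + 1"
      using less.IH[of ?m2] 4 by simp
    have ra4: "a ?m4 = a ?m3 + a ?m2 + t ?m4" using RA[of ?m4] by simp
    have ra3: "a ?m3 = a ?m2 + a ?m1 + t ?m3" using RA[of ?m3] by simp
    have rt4: "t ?m4 = a ?m1 + 2 * t ?m3" using RT[of ?m4] by simp
    have p4: "pell ?m4 = 2 * pell ?m3 + pell ?m2" by simp
    have p3: "pell ?m3 = 2 * pell ?m2 + pell ?m1" by simp
    have "t ?m4 + 1 = a ?m3" using IH3 ra3 rt4 by linarith
    moreover have "2 * a ?m4 = pell ?m4 + pell ?m3 + 1" using IH3 IH2 ra4 ra3 rt4 p4 p3 by linarith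
    ultimately show ?thesis using 4 by simp
  qed
qed

lemma facts_a:
  shows "card (Fs 0) = 1" "card (Fs 1) = 1"
    "\<And>n. n \<le> 2 \<Longrightarrow> card (T n) = 0"
    "\<And>n. 2 \<le> n \<Longrightarrow> card (Fs n) = card (Fs (n - 1)) + card (Fs (n - 2)) + card (T n)"
    "\<And>n. 3 \<le> n \<Longrightarrow> card (T n) = card (Fs (n - 3)) + 2 * card (T (n - 1))"
proof -
  show f0: "card (Fs 0) = 1" using Fs0 by simp
  show tz: "\<And>n. n \<le> 2 \<Longrightarrow> card (T n) = 0" using T_small by simp
  show "card (Fs 1) = 1"
  proof -
    have "card (Fs 1) = card (S1 1) + card (S2 1) + card (T 1)" using recA[of 1] by simp
    moreover have "card (S1 1) = 1" using card_S1[of 0] f0 by simp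
    ultimately show ?thesis using S2_one tz[of 1] by simp
  qed
  show "\<And>n. 2 \<le> n \<Longrightarrow> card (Fs n) = card (Fs (n - 1)) + card (Fs (n - 2)) + card (T n)"
  proof -
    fix n :: nat assume n: "2 \<le> n"
    have e1: "n - 1 + 1 = n" "n - 2 + 2 = n" using n by simp_all
    have "card (S1 n) = card (Fs (n - 1))" using card_S1[of "n - 1"] unfolding e1 .
    moreover have "card (S2 n) = card (Fs (n - 2))" using card_S2[of "n - 2"] unfolding e1 .
    ultimately show "card (Fs n) = card (Fs (n - 1)) + card (Fs (n - 2)) + card (T n)"
      using recA[of n] n by simp
  qed
  show "\<And>n. 3 \<le> n \<Longrightarrow> card (T n) = card (Fs (n - 3)) + 2 * card (T (n - 1))"
  proof -
    fix n :: nat assume n: "3 \<le> n"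
    have e1: "n - 3 + 3 = n" "Suc (n - 1) = n" using n by simp_all
    have "card (TA n) = card (Fs (n - 3))" using card_TA[of "n - 3"] unfolding e1 .
    moreover have "card (TB n) = card (T (n - 1))" using card_TB[of "n - 1"] unfolding e1 .
    moreover have "card (TC n) = card (T (n - 1))" using card_TC[of "n - 1"] unfolding e1 .
    ultimately show "card (T n) = card (Fs (n - 3)) + 2 * card (T (n - 1))"
      using recT[of n] by simp
  qed
qed

theorem mainTheorem19:
  fixes n :: nat
  assumes "n \<ge> 1"
  shows "real (card (F n [[3,2,1],[3,1,5,2,4]])) = (real (pell n) + real (pell (n - 1)) + 1) / 2"
proof -
  have "2 * card (Fs n) = pell n + pell (n - 1) + 1"
    using rec_sol[of "\<lambda>n. card (Fs n)" "\<lambda>n. card (T n)", OF facts_a] assms by blast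
  then have "real (2 * card (Fs n)) = real (pell n + pell (n - 1) + 1)" by simp
  then show ?thesis unfolding F_Fs by simp
qed

end
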